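(* For every $n\ge 1$, every $\kappa\le\frac{n}{2n-1}$ and every doubly stochastic $n\times n$ matrix $\mathcal M$, there exists a directed $(2n-1)$-regular multigraph $G$ on $[n]$ whose direct throughput with respect to $\mathcal M$ is at least $\kappa$ (i.e., $G$ directly hosts $\kappa\mathcal M$).
   Context: Let $n\ge 1$ and $[n]=\{1,\dots,n\}$. Networks are finite directed multigraphs on vertex set $[n]$; self-loops and parallel arcs are allowed. A directed multigraph is directed $r$-regular if every vertex has exactly $r$ outgoing and exactly $r$ incoming arcs (a self-loop at $v$ counts as one outgoing and one incoming arc of $v$). An $n\times n$ matrix is doubly stochastic if all entries are nonnegative and every row and every column sums to $1$. In a directed $(2n-1)$-regular multigraph $G$ on $[n]$ every arc has capacity $\frac{1}{2n-1}$. $G$ directly hosts a nonnegative $n\times n$ matrix $\mathcal M=(a_{i,j})$ if the demand $a_{u,v}$ from $u$ to $v$ can be routed entirely on arcs from $u$ to $v$ without exceeding capacities, i.e., equivalently, if $a_{u,v}\le \frac{m_{u,v}}{2n-1}$ for all $u,v\in[n]$, where $m_{u,v}$ is the number of arcs from $u$ to $v$ in $G$. The direct throughput of $G$ with respect to a doubly stochastic $\mathcal M$ is the largest $\theta$ such that $G$ directly hosts $\theta\mathcal M$. *)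

theory Defs
  imports Complex_Main
begin

text \<open>A directed multigraph on vertex set {1..n} is represented by its arc
multiplicity function: m u v is the number of arcs from u to v
(self-loops are m v v).\<close>

definition multigraph_on :: "nat \<Rightarrow> (nat \<Rightarrow> nat \<Rightarrow> nat) \<Rightarrow> bool" where
  "multigraph_on n m \<longleftrightarrow>
     (\<forall>u v. (u \<notin> {1..n} \<or> v \<notin> {1..n}) \<longrightarrow> m u v = 0)"

definition directed_regular :: "nat \<Rightarrow> nat \<Rightarrow> (nat \<Rightarrow> nat \<Rightarrow> nat) \<Rightarrow> bool" where
  "directed_regular n r m \<longleftrightarrow> multigraph_on n m \<and>
     (\<forall>u\<in>{1..n}. (\<Sum>v\<in>{1..n}. m u v) = r) \<and>
     (\<forall>v\<in>{1..n}. (\<Sum>u\<in>{1..n}. m u v) = r)"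

text \<open>n x n real matrices are functions nat => nat => real, indexed by {1..n}.\<close>

definition doubly_stochastic :: "nat \<Rightarrow> (nat \<Rightarrow> nat \<Rightarrow> real) \<Rightarrow> bool" where
  "doubly_stochastic n A \<longleftrightarrow>
     (\<forall>i\<in>{1..n}. \<forall>j\<in>{1..n}. 0 \<le> A i j) \<and>
     (\<forall>i\<in>{1..n}. (\<Sum>j\<in>{1..n}. A i j) = 1) \<and>
     (\<forall>j\<in>{1..n}. (\<Sum>i\<in>{1..n}. A i j) = 1)"

text \<open>G (with arcs of capacity 1/(2n-1)) directly hosts the matrix A.\<close>

definition directly_hosts :: "nat \<Rightarrow> (nat \<Rightarrow> nat \<Rightarrow> nat) \<Rightarrow> (nat \<Rightarrow> nat \<Rightarrow> real) \<Rightarrow> bool" where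
  "directly_hosts n m A \<longleftrightarrow>
     (\<forall>u\<in>{1..n}. \<forall>v\<in>{1..n}. A u v \<le> real (m u v) / (2 * real n - 1))"

end

theory Submission
  imports Defs
begin

lemma transport:
  fixes A :: "nat set"
  assumes fin: "finite A"
  shows "\<And>r s. sum r A = T \<Longrightarrow> sum s A = T \<Longrightarrow>
     \<exists>d::nat\<Rightarrow>nat\<Rightarrow>nat. (\<forall>u\<in>A. sum (d u) A = r u) \<and> (\<forall>v\<in>A. (\<Sum>u\<in>A. d u v) = s v)"
proof (induction T)
  case 0
  then show ?case using fin by (intro exI[of _ "\<lambda>_ _. 0"]) auto
next
  case (Suc k)
  obtain u where u: "u \<in> A" "r u > 0"
    using Suc.prems(1) sum.neutral[of A r] by (metis gr0I nat.distinct(1))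
  obtain v where v: "v \<in> A" "s v > 0"
    using Suc.prems(2) sum.neutral[of A s] by (metis gr0I nat.distinct(1))
  define r' where "r' = r(u := r u - 1)"
  define s' where "s' = s(v := s v - 1)"
  have "sum r A = sum r' A + 1"
    using u fin unfolding r'_def
    by (simp add: sum.remove[of A u] sum.cong[of "A - {u}" "A - {u}" "r(u := r u - 1)" r])
  hence r': "sum r' A = k" using Suc.prems by simp
  have "sum s A = sum s' A + 1"
    using v fin unfolding s'_def
    by (simp add: sum.remove[of A v] sum.cong[of "A - {v}" "A - {v}" "s(v := s v - 1)" s])
  hence s': "sum s' A = k" using Suc.prems by simp
  obtain d where d: "\<forall>x\<in>A. sum (d x) A = r' x" "\<forall>y\<in>A. (\<Sum>x\<in>A. d x y) = s' y"
    using Suc.IH[OF r' s'] by blast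
  define e where "e x y = d x y + (if x = u \<and> y = v then 1 else 0)" for x y
  have "\<forall>x\<in>A. sum (e x) A = r x"
  proof
    fix x assume x: "x \<in> A"
    have "sum (e x) A = sum (d x) A + (\<Sum>y\<in>A. if x = u \<and> y = v then 1 else 0)"
      unfolding e_def by (simp add: sum.distrib)
    also have "(\<Sum>y\<in>A. (if x = u \<and> y = v then 1 else 0::nat)) = (if x = u then 1 else 0)"
      using v fin by (cases "x = u") auto
    finally show "sum (e x) A = r x" using d x u unfolding r'_def by auto
  qed
  moreover have "\<forall>y\<in>A. (\<Sum>x\<in>A. e x y) = s y"
  proof
    fix y assume y: "y \<in> A"
    have "(\<Sum>x\<in>A. e x y) = (\<Sum>x\<in>A. d x y) + (\<Sum>x\<in>A. if x = u \<and> y = v then 1 else 0)"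
      unfolding e_def by (simp add: sum.distrib)
    also have "(\<Sum>x\<in>A. (if x = u \<and> y = v then 1 else 0::nat)) = (if y = v then 1 else 0)"
      using u fin by (cases "y = v") auto
    finally show "(\<Sum>x\<in>A. e x y) = s y" using d y v unfolding s'_def by auto
  qed
  ultimately show ?case by blast
qed

theorem proposition3p5:
  fixes n :: nat and \<kappa> :: real and M :: "nat \<Rightarrow> nat \<Rightarrow> real"
  assumes "n \<ge> 1"
    and "\<kappa> \<le> real n / (2 * real n - 1)"
    and "doubly_stochastic n M"
  shows "\<exists>m. directed_regular n (2 * n - 1) m \<and>
                directly_hosts n m (\<lambda>i j. \<kappa> * M i j)"
proof -
  let ?A = "{1..n}"
  define c where "c u v = nat (ceiling (real n * M u v))" for u v
  have M0: "\<And>u v. u \<in> ?A \<Longrightarrow> v \<in> ?A \<Longrightarrow> 0 \<le> M u v"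
    using assms(3) unfolding doubly_stochastic_def by blast
  have crl: "real (c u v) = ceiling (real n * M u v)" if "u \<in> ?A" "v \<in> ?A" for u v
    using M0[OF that] unfolding c_def by simp
  have cge: "real n * M u v \<le> real (c u v)" if "u \<in> ?A" "v \<in> ?A" for u v
    using crl[OF that] by (simp add: le_of_int_ceiling)
  have clt: "real (c u v) < real n * M u v + 1" if "u \<in> ?A" "v \<in> ?A" for u v
    using crl[OF that] by (simp add: ceiling_less_iff) linarith
  have row: "(\<Sum>v\<in>?A. c u v) \<le> 2 * n - 1" if u: "u \<in> ?A" for u
  proof -
    have "real (\<Sum>v\<in>?A. c u v) = (\<Sum>v\<in>?A. real (c u v))" by simp
    also have "\<dots> < (\<Sum>v\<in>?A. real n * M u v + 1)"
      using clt u assms(1) by (intro sum_strict_mono) auto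
    also have "\<dots> = real n * (\<Sum>v\<in>?A. M u v) + real n"
      by (simp add: sum.distrib sum_distrib_left)
    also have "\<dots> = 2 * real n" using assms(3) u unfolding doubly_stochastic_def by simp
    finally have "(\<Sum>v\<in>?A. c u v) < 2 * n" by linarith
    thus ?thesis by linarith
  qed
  have col: "(\<Sum>u\<in>?A. c u v) \<le> 2 * n - 1" if v: "v \<in> ?A" for v
  proof -
    have "real (\<Sum>u\<in>?A. c u v) = (\<Sum>u\<in>?A. real (c u v))" by simp
    also have "\<dots> < (\<Sum>u\<in>?A. real n * M u v + 1)"
      using clt v assms(1) by (intro sum_strict_mono) auto
    also have "\<dots> = real n * (\<Sum>u\<in>?A. M u v) + real n"
      by (simp add: sum.distrib sum_distrib_left)
    also have "\<dots> = 2 * real n" using assms(3) v unfolding doubly_stochastic_def by simp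
    finally have "(\<Sum>u\<in>?A. c u v) < 2 * n" by linarith
    thus ?thesis by linarith
  qed
  define r where "r u = 2 * n - 1 - (\<Sum>v\<in>?A. c u v)" for u
  define s where "s v = 2 * n - 1 - (\<Sum>u\<in>?A. c u v)" for v
  have "sum r ?A + (\<Sum>u\<in>?A. \<Sum>v\<in>?A. c u v) = n * (2 * n - 1)"
  proof -
    have "(\<Sum>u\<in>?A. r u + (\<Sum>v\<in>?A. c u v)) = (\<Sum>u\<in>?A. 2 * n - 1)"
      proof (rule sum.cong[OF refl])
        fix x assume "x \<in> ?A"
        from row[OF this] show "r x + (\<Sum>v\<in>?A. c x v) = 2 * n - 1" unfolding r_def by linarith
      qed
    thus ?thesis by (simp add: sum.distrib)
  qed
  moreover have "sum s ?A + (\<Sum>v\<in>?A. \<Sum>u\<in>?A. c u v) = n * (2 * n - 1)"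
  proof -
    have "(\<Sum>v\<in>?A. s v + (\<Sum>u\<in>?A. c u v)) = (\<Sum>v\<in>?A. 2 * n - 1)"
      proof (rule sum.cong[OF refl])
        fix x assume "x \<in> ?A"
        from col[OF this] show "s x + (\<Sum>u\<in>?A. c u x) = 2 * n - 1" unfolding s_def by linarith
      qed
    thus ?thesis by (simp add: sum.distrib)
  qed
  moreover have "(\<Sum>u\<in>?A. \<Sum>v\<in>?A. c u v) = (\<Sum>v\<in>?A. \<Sum>u\<in>?A. c u v)"
    by (rule sum.swap)
  ultimately have eq: "sum r ?A = sum s ?A" by linarith
  obtain d where d: "\<forall>u\<in>?A. sum (d u) ?A = r u" "\<forall>v\<in>?A. (\<Sum>u\<in>?A. d u v) = s v"
    using transport[OF finite_atLeastAtMost refl eq[symmetric]] by blast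
  define m where "m u v = (if u \<in> ?A \<and> v \<in> ?A then c u v + d u v else 0)" for u v
  have "directed_regular n (2 * n - 1) m"
    unfolding directed_regular_def multigraph_on_def
  proof (intro conjI ballI allI impI)
    fix u v :: nat assume "u \<notin> ?A \<or> v \<notin> ?A" thus "m u v = 0" unfolding m_def by auto
  next
    fix u assume u: "u \<in> ?A"
    have "(\<Sum>v\<in>?A. m u v) = (\<Sum>v\<in>?A. c u v) + sum (d u) ?A"
      unfolding m_def using u by (simp add: sum.distrib)
    thus "(\<Sum>v\<in>?A. m u v) = 2 * n - 1" using d u row[OF u] unfolding r_def by simp
  next
    fix v assume v: "v \<in> ?A"
    have "(\<Sum>u\<in>?A. m u v) = (\<Sum>u\<in>?A. c u v) + (\<Sum>u\<in>?A. d u v)"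
      unfolding m_def using v by (simp add: sum.distrib)
    thus "(\<Sum>u\<in>?A. m u v) = 2 * n - 1" using d v col[OF v] unfolding s_def by simp
  qed
  moreover have "directly_hosts n m (\<lambda>i j. \<kappa> * M i j)"
    unfolding directly_hosts_def
  proof (intro ballI)
    fix u v assume uv: "u \<in> ?A" "v \<in> ?A"
    have pos: "2 * real n - 1 > 0" using assms(1) by simp
    have "real (c u v) \<le> real (m u v)" unfolding m_def using uv by simp
    hence cm: "real n * M u v \<le> real (m u v)" using cge[OF uv] by linarith
    show "\<kappa> * M u v \<le> real (m u v) / (2 * real n - 1)"
    proof (cases "\<kappa> \<le> 0")
      case True
      hence "\<kappa> * M u v \<le> 0" using M0[OF uv] by (simp add: mult_nonpos_nonneg)
      moreover have "0 \<le> real (m u v) / (2 * real n - 1)" using pos by simp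
      ultimately show ?thesis by linarith
    next
      case False
      have "\<kappa> * M u v \<le> real n / (2 * real n - 1) * M u v"
        using mult_right_mono[OF assms(2) M0[OF uv]] .
      also have "\<dots> = real n * M u v / (2 * real n - 1)" by simp
      also have "\<dots> \<le> real (m u v) / (2 * real n - 1)"
        using cm pos by (simp add: divide_right_mono)
      finally show ?thesis .
    qed
  qed
  ultimately show ?thesis by blast
qed

end
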